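(* Let $G\in[0,1]^{Q\times Q}$ be a stochastic matrix ($G\vec 1=\vec 1$) over a finite set $Q$ such that the directed graph of $G$ (edge $p\to q$ iff $G[p,q]>0$) has exactly one bottom strongly connected component, and let $y_{\min}$ be the smallest nonzero entry of $G$. Let $\vec r\in\mathbb{R}^Q$ and $\vec f(n)=\sum_{i=0}^{n-1}G^i\vec r$ for $n\in\mathbb{N}$. For $\vec v\in\mathbb{R}^Q$ put $|\vec v|_{\mathit{diff}}=\max_{p_1,p_2\in Q}|\vec v[p_1]-\vec v[p_2]|$. Then $|\vec f(n)|_{\mathit{diff}}\le C\,|\vec r|_{\mathit{diff}}$ for all $n\in\mathbb{N}$, where $C=10|Q|/y_{\min}^{|Q|}$.
   Context: Bottom strongly connected component: a strongly connected component of the graph with no edges leaving it. *)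

theory Defs
  imports "HOL-Analysis.Analysis"
begin

definition mat_edge :: "real^'q^'q \<Rightarrow> 'q \<Rightarrow> 'q \<Rightarrow> bool" where
  "mat_edge G p q \<longleftrightarrow> G $ p $ q > 0"

definition is_scc :: "('q \<Rightarrow> 'q \<Rightarrow> bool) \<Rightarrow> 'q set \<Rightarrow> bool" where
  "is_scc E S \<longleftrightarrow> S \<noteq> {} \<and> (\<forall>p\<in>S. \<forall>q\<in>S. E\<^sup>*\<^sup>* p q) \<and>
     (\<forall>p\<in>S. \<forall>q. E\<^sup>*\<^sup>* p q \<and> E\<^sup>*\<^sup>* q p \<longrightarrow> q \<in> S)"

definition is_bscc :: "('q \<Rightarrow> 'q \<Rightarrow> bool) \<Rightarrow> 'q set \<Rightarrow> bool" where
  "is_bscc E S \<longleftrightarrow> is_scc E S \<and> (\<forall>p\<in>S. \<forall>q. E p q \<longrightarrow> q \<in> S)"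

definition stochastic :: "real^'q^'q \<Rightarrow> bool" where
  "stochastic G \<longleftrightarrow> (\<forall>p q. 0 \<le> G $ p $ q \<and> G $ p $ q \<le> 1) \<and> G *v (\<chi> p. 1) = (\<chi> p. 1)"

definition matpow :: "real^'q^'q \<Rightarrow> nat \<Rightarrow> real^'q^'q" where
  "matpow G i = (((**) G) ^^ i) (mat 1)"

definition diff_norm :: "real^'q::finite \<Rightarrow> real" where
  "diff_norm v = Max {\<bar>v $ p1 - v $ p2\<bar> | p1 p2. True}"

definition ymin :: "real^'q::finite^'q \<Rightarrow> real" where
  "ymin G = Min {G $ p $ q | p q. G $ p $ q \<noteq> 0}"

end

theory Submission
  imports Defs
begin

fun uu :: "('q \<Rightarrow> 'q \<Rightarrow> real) \<Rightarrow> nat \<Rightarrow> 'q::finite \<Rightarrow> real" where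
  "uu A 0 p = 1"
| "uu A (Suc k) p = (\<Sum>q\<in>UNIV. A p q * uu A k q)"

lemma reach_bscc:
  fixes E :: "'q::finite \<Rightarrow> 'q \<Rightarrow> bool"
  assumes "\<exists>!S. is_bscc E S"
  shows "\<exists>s. \<forall>p. E\<^sup>*\<^sup>* p s"
proof -
  obtain S0 where S0: "is_bscc E S0" and uniq: "\<And>S. is_bscc E S \<Longrightarrow> S = S0"
    using assms by blast
  obtain s where s: "s \<in> S0" using S0 unfolding is_bscc_def is_scc_def by blast
  have "E\<^sup>*\<^sup>* p s" for p
  proof -
    define R where "R x = {z. E\<^sup>*\<^sup>* x z}" for x
    obtain q where q: "E\<^sup>*\<^sup>* p q" and qmin: "\<And>q'. E\<^sup>*\<^sup>* p q' \<Longrightarrow> card (R q) \<le> card (R q')"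
      using ex_has_least_nat[of "\<lambda>q. E\<^sup>*\<^sup>* p q" p "\<lambda>q. card (R q)"] by auto
    have key: "E\<^sup>*\<^sup>* x q" if "E\<^sup>*\<^sup>* q x" for x
    proof -
      have "R x \<subseteq> R q" using that unfolding R_def by (auto intro: rtranclp_trans)
      moreover have "card (R q) \<le> card (R x)" using qmin[of x] q that by (meson rtranclp_trans)
      ultimately have "R x = R q" using card_subset_eq[OF finite] by (metis antisym card_mono finite)
      then show ?thesis unfolding R_def by auto
    qed
    have "is_bscc E (R q)" unfolding is_bscc_def is_scc_def R_def
    proof (intro conjI ballI allI impI)
      show "{z. E\<^sup>*\<^sup>* q z} \<noteq> {}" by auto
    next
      fix x z assume "x \<in> {z. E\<^sup>*\<^sup>* q z}" "z \<in> {z. E\<^sup>*\<^sup>* q z}"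
      then show "E\<^sup>*\<^sup>* x z" using key by (auto intro: rtranclp_trans)
    next
      fix x z assume "x \<in> {z. E\<^sup>*\<^sup>* q z}" "E\<^sup>*\<^sup>* x z \<and> E\<^sup>*\<^sup>* z x"
      then show "z \<in> {z. E\<^sup>*\<^sup>* q z}" by (auto intro: rtranclp_trans)
    next
      fix x z assume "x \<in> {z. E\<^sup>*\<^sup>* q z}" "E x z"
      then show "z \<in> {z. E\<^sup>*\<^sup>* q z}" by (auto intro: rtranclp.rtrancl_into_rtrancl)
    qed
    then have "R q = S0" by (rule uniq)
    then have "E\<^sup>*\<^sup>* q s" using s unfolding R_def by auto
    then show ?thesis using q by (auto intro: rtranclp_trans)
  qed
  then show ?thesis by blast
qed

lemma sum_split_add: "(\<Sum>k<m+N. f k) = (\<Sum>k<N. f k) + (\<Sum>k<m. f (k+N::nat)) " for f :: "nat \<Rightarrow> real"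
  by (induction m) (auto simp: add.commute)

theorem mainTheorem19:
  fixes G :: "real^'q::finite^'q" and r :: "real^'q" and n :: nat
  assumes "stochastic G"
    and "\<exists>!S. is_bscc (mat_edge G) S"
  shows "diff_norm (\<Sum>i<n. matpow G i *v r)
           \<le> (10 * real CARD('q) / ymin G ^ CARD('q)) * diff_norm r"
proof -
  define N where "N = CARD('q)"
  define y where "y = ymin G"
  have N0: "0 < N" unfolding N_def by simp
  have G0: "0 \<le> G$p$q" for p q using assms(1) unfolding stochastic_def by auto
  have G1: "G$p$q \<le> 1" for p q using assms(1) unfolding stochastic_def by auto
  have rs: "(\<Sum>q\<in>UNIV. G$p$q) = 1" for p
  proof -
    have "(G *v (\<chi> p. 1)) $ p = (\<chi> p. (1::real)) $ p" using assms(1) by (simp add: stochastic_def)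
    thus ?thesis by (simp add: matrix_vector_mult_def)
  qed
  define Y where "Y = {G $ p $ q | p q. G $ p $ q \<noteq> 0}"
  have Yfin: "finite Y" unfolding Y_def
    by (rule finite_subset[of _ "(\<lambda>(p,q). G$p$q) ` UNIV"]) auto
  have Yne: "Y \<noteq> {}"
  proof
    assume "Y = {}"
    then have "G$p$q = 0" for p q unfolding Y_def by auto
    then show False using rs[of undefined] by simp
  qed
  have Ypos: "\<And>x. x \<in> Y \<Longrightarrow> 0 < x \<and> x \<le> 1" unfolding Y_def using G0 G1
    by (auto simp: less_le)
  have y0: "0 < y" unfolding y_def ymin_def Y_def[symmetric] using Yfin Yne Ypos by auto
  have y1: "y \<le> 1" unfolding y_def ymin_def Y_def[symmetric]
    using Yfin Yne Ypos by (meson Min_in order_trans)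
  have yle: "y \<le> G$p$q" if "G$p$q > 0" for p q
  proof -
    have "G$p$q \<in> Y" unfolding Y_def using that by fastforce
    then show ?thesis unfolding y_def ymin_def Y_def[symmetric] using Yfin by (intro Min_le)
  qed
  obtain s where reach: "\<And>p. (mat_edge G)\<^sup>*\<^sup>* p s" using reach_bscc[OF assms(2)] by blast
  define A where "A p q = (if p = s \<or> q = s then 0 else G$p$q)" for p q
  have A0: "0 \<le> A p q" for p q unfolding A_def using G0 by auto
  have AG: "A p q \<le> G$p$q" for p q unfolding A_def using G0 by auto
  define u where "u = uu A"
  have u_Suc: "u (Suc k) p = (\<Sum>q\<in>UNIV. A p q * u k q)" for k p unfolding u_def by simp
  have u_0: "u 0 p = 1" for p unfolding u_def by simp
  have u0: "0 \<le> u k p" for k p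
    by (induction k arbitrary: p) (auto simp: u_Suc u_0 A0 intro: sum_nonneg)
  have udec: "u (Suc k) p \<le> u k p" for k p
  proof (induction k arbitrary: p)
    case 0
    have "(\<Sum>q\<in>UNIV. A p q * u 0 q) \<le> (\<Sum>q\<in>UNIV. G$p$q)"
      by (rule sum_mono) (simp add: u_0 AG)
    then show ?case by (simp add: u_Suc rs u_0)
  next
    case (Suc k)
    have "(\<Sum>q\<in>UNIV. A p q * u (Suc k) q) \<le> (\<Sum>q\<in>UNIV. A p q * u k q)"
      by (rule sum_mono) (simp add: Suc A0 mult_left_mono)
    then show ?case by (simp only: u_Suc)
  qed
  have u1: "u k p \<le> 1" for k p
    by (induction k arbitrary: p) (auto simp: u_0 intro: order_trans[OF udec])
  have us: "u (Suc k) s = 0" for k by (simp add: u_Suc A_def)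
  define R where "R k = {p. u k p \<le> 1 - y^k}" for k
  have ypow: "y^Suc k \<le> y^k" for k using y0 y1 by (simp add: mult_left_le_one_le)
  have Rmono: "R k \<subseteq> R (Suc k)" for k
    unfolding R_def using udec ypow by (smt (verit) mem_Collect_eq subsetI)
  have sR: "s \<in> R (Suc k)" for k
    unfolding R_def using us y0 y1 power_le_one[of y "Suc k"] by simp
  have edge: "p \<in> R (Suc k)" if "G$p$q > 0" "q \<in> R k" for p q k
  proof (cases "p = s")
    case True then show ?thesis using sR by simp
  next
    case False
    define w where "w q' = (if q' = q then u k q else 1)" for q'
    have "u (Suc k) p \<le> (\<Sum>q'\<in>UNIV. G$p$q' * w q')"
      unfolding u_Suc
      by (rule sum_mono) (auto simp: w_def AG mult_right_mono u0 A0 G0 intro: order_trans[OF mult_left_mono[OF u1 A0]])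
    also have "(\<Sum>q'\<in>UNIV. G$p$q' * w q') = (\<Sum>q'\<in>UNIV. G$p$q') - (\<Sum>q'\<in>UNIV. if q' = q then G$p$q * (1 - u k q) else 0)"
      unfolding sum_subtractf[symmetric] by (rule sum.cong) (auto simp: w_def algebra_simps)
    also have "\<dots> = 1 - G$p$q * (1 - u k q)" by (simp add: rs)
    also have "\<dots> \<le> 1 - G$p$q * y^k"
      using that(2) G0[of p q] unfolding R_def by (simp add: mult_left_mono)
    also have "\<dots> \<le> 1 - y^Suc k"
      using yle[OF that(1)] y0 by (simp add: mult_right_mono)
    finally show ?thesis unfolding R_def by simp
  qed
  have closed: "R (Suc k) = UNIV" if "R (Suc (Suc k)) = R (Suc k)" for k
  proof -
    have "x \<in> R (Suc k)" if "(mat_edge G)\<^sup>*\<^sup>* x s" for x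
      using that
    proof (induction rule: converse_rtranclp_induct)
      case base then show ?case by (rule sR)
    next
      case (step x z)
      then show ?case using edge[of x z "Suc k"] \<open>R (Suc (Suc k)) = R (Suc k)\<close>
        unfolding mat_edge_def by auto
    qed
    then show ?thesis using reach by auto
  qed
  have count: "R (Suc k) = UNIV \<or> Suc k \<le> card (R (Suc k))" for k
  proof (induction k)
    case 0
    have "R (Suc 0) \<noteq> {}" using sR by auto
    then show ?case by (simp add: card_gt_0_iff Suc_le_eq)
  next
    case (Suc k)
    show ?case
    proof (cases "R (Suc k) = UNIV")
      case True then show ?thesis using Rmono[of "Suc k"] by auto
    next
      case False
      then have "R (Suc k) \<noteq> R (Suc (Suc k))" using closed by metis
      then have "R (Suc k) \<subset> R (Suc (Suc k))" using Rmono by auto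
      then have "card (R (Suc k)) < card (R (Suc (Suc k)))" by (simp add: psubset_card_mono)
      then show ?thesis using Suc False by auto
    qed
  qed
  have RN: "R N = UNIV"
  proof -
    obtain m where m: "N = Suc m" using N0 by (cases N) auto
    have "card (R N) \<le> N" unfolding N_def by (simp add: card_mono)
    then show ?thesis using count[of m] m unfolding N_def
      by (metis card_eq_UNIV_imp_eq_UNIV finite le_antisym)
  qed
  define c where "c = 1 - y^N"
  have uN: "u N p \<le> c" for p using RN unfolding R_def c_def by auto
  have ushift: "u (k + N) p \<le> c * u k p" for k p
  proof (induction k arbitrary: p)
    case 0 then show ?case using uN by (simp add: u_0)
  next
    case (Suc k)
    have "u (Suc k + N) p = (\<Sum>q\<in>UNIV. A p q * u (k+N) q)" by (simp add: u_Suc)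
    also have "\<dots> \<le> (\<Sum>q\<in>UNIV. A p q * (c * u k q))"
      by (rule sum_mono) (simp add: Suc A0 mult_left_mono)
    also have "\<dots> = c * u (Suc k) p" by (simp add: u_Suc sum_distrib_left algebra_simps)
    finally show ?case .
  qed
  define V where "V n p = (\<Sum>k<n. u k p)" for n p
  have V0: "0 \<le> V n p" for n p unfolding V_def by (simp add: sum_nonneg u0)
  have yN: "0 < y^N" "y^N \<le> 1" using y0 y1 by (auto simp: power_le_one)
  define B where "B = real N / y^N"
  have NB: "real N \<le> B" unfolding B_def using yN by (simp add: le_divide_eq mult_left_le)
  have Vb: "V n p \<le> B" for n p
  proof (induction n arbitrary: p rule: less_induct)
    case (less n)
    show ?case
    proof (cases "n \<le> N")
      case True
      have "V n p \<le> (\<Sum>k<n. 1)" unfolding V_def by (rule sum_mono) (simp add: u1)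
      also have "\<dots> \<le> real N" using True by simp
      finally show ?thesis using NB by simp
    next
      case False
      then obtain m where m: "n = m + N" "m < n" using N0 by (metis add.commute le_add_diff_inverse less_imp_le_nat not_le less_add_same_cancel1)
      have "V n p = (\<Sum>k<N. u k p) + (\<Sum>k<m. u (k+N) p)" unfolding V_def m(1) by (rule sum_split_add)
      also have "\<dots> \<le> real N + c * V m p"
      proof (rule add_mono)
        show "(\<Sum>k<N. u k p) \<le> real N"
          using sum_mono[of "{..<N}" "\<lambda>k. u k p" "\<lambda>_. 1"] u1 by simp
        show "(\<Sum>k<m. u (k+N) p) \<le> c * V m p"
          unfolding V_def sum_distrib_left by (rule sum_mono) (rule ushift)
      qed
      also have "\<dots> \<le> real N + c * B"
        using less(1)[OF m(2)] yN unfolding c_def by (simp add: mult_left_mono)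
      also have "\<dots> = B" unfolding B_def c_def using yN y0 by (simp add: divide_simps) (simp add: algebra_simps)
      finally show ?thesis .
    qed
  qed
  have VSuc: "V (Suc n) p = 1 + (\<Sum>q\<in>UNIV. A p q * V n q)" for n p
    unfolding V_def sum.lessThan_Suc_shift u_Suc u_0 sum_distrib_left
    by (simp add: sum.swap[of _ UNIV])
  define D where "D = diff_norm r"
  define DS where "DS = {\<bar>r $ p1 - r $ p2\<bar> | p1 p2. True}"
  have DSfin: "finite DS" unfolding DS_def
    by (rule finite_subset[of _ "(\<lambda>(p,q). \<bar>r$p - r$q\<bar>) ` UNIV"]) auto
  have Dge: "\<bar>r$p - r$q\<bar> \<le> D" for p q
    unfolding D_def diff_norm_def DS_def[symmetric] using DSfin by (intro Max_ge) (auto simp: DS_def)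
  have D0: "0 \<le> D" using Dge[of undefined undefined] by simp
  define w where "w n = matpow G n *v r" for n
  have w0: "w 0 = r" unfolding w_def matpow_def by simp
  have wS: "w (Suc n) $ p = (\<Sum>q\<in>UNIV. G$p$q * w n $ q)" for n p
  proof -
    have "w (Suc n) = G *v w n" unfolding w_def matpow_def
      by (simp add: matrix_vector_mul_assoc)
    then show ?thesis by (simp add: matrix_vector_mult_def)
  qed
  have range: "\<bar>r$p - w n $ q\<bar> \<le> D" for n p q
  proof (induction n arbitrary: q)
    case 0 then show ?case using Dge by (simp add: w0)
  next
    case (Suc n)
    have "r$p - w (Suc n) $ q = (\<Sum>q'\<in>UNIV. G$q$q' * (r$p - w n $ q'))"
      by (simp add: wS right_diff_distrib sum_subtractf sum_distrib_right[symmetric] rs)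
    then have "\<bar>r$p - w (Suc n) $ q\<bar> \<le> (\<Sum>q'\<in>UNIV. G$q$q' * \<bar>r$p - w n $ q'\<bar>)"
      by (simp add: sum_abs[THEN order_trans] abs_mult G0 order_trans[OF sum_abs])
    also have "\<dots> \<le> (\<Sum>q'\<in>UNIV. G$q$q' * D)"
      by (rule sum_mono) (simp add: Suc G0 mult_left_mono)
    also have "\<dots> = D" by (simp add: sum_distrib_right[symmetric] rs)
    finally show ?case .
  qed
  define F where "F n = (\<Sum>i<n. matpow G i *v r)" for n
  have F0: "F 0 = 0" unfolding F_def by simp
  have FS1: "F (Suc n) $ p = F n $ p + w n $ p" for n p unfolding F_def w_def by simp
  have FS2: "F (Suc n) $ p = r $ p + (\<Sum>q\<in>UNIV. G$p$q * F n $ q)" for n p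
  proof (induction n arbitrary: p)
    case 0 then show ?case by (simp add: FS1 F0 w0)
  next
    case (Suc n)
    have "F (Suc (Suc n)) $ p = F (Suc n) $ p + w (Suc n) $ p" by (rule FS1)
    also have "\<dots> = r $ p + (\<Sum>q\<in>UNIV. G$p$q * (F n $ q + w n $ q))"
      by (simp add: Suc wS distrib_left sum.distrib)
    also have "\<dots> = r $ p + (\<Sum>q\<in>UNIV. G$p$q * F (Suc n) $ q)" by (simp add: FS1)
    finally show ?case .
  qed
  define e where "e n p = F n $ p - F n $ s" for n p
  have ebound: "\<bar>e n p\<bar> \<le> D * V n p" for n p
  proof (induction n arbitrary: p)
    case 0 then show ?case by (simp add: e_def F0 V_def)
  next
    case (Suc n)
    show ?case
    proof (cases "p = s")
      case True then show ?thesis using D0 V0 by (simp add: e_def)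
    next
      case False
      have "e (Suc n) p = (r$p - w n $ s) + (\<Sum>q\<in>UNIV. G$p$q * e n q)"
        unfolding e_def
        by (simp add: FS2[of n p] FS1[of n s] right_diff_distrib sum_subtractf sum_distrib_right[symmetric] rs)
      also have "(\<Sum>q\<in>UNIV. G$p$q * e n q) = (\<Sum>q\<in>UNIV. A p q * e n q)"
        by (rule sum.cong) (auto simp: A_def False e_def)
      finally have "\<bar>e (Suc n) p\<bar> \<le> \<bar>r$p - w n $ s\<bar> + (\<Sum>q\<in>UNIV. A p q * \<bar>e n q\<bar>)"
        by (simp add: A0 abs_mult order_trans[OF abs_triangle_ineq] add_left_mono order_trans[OF sum_abs])
      also have "\<dots> \<le> D + (\<Sum>q\<in>UNIV. A p q * (D * V n q))"
        by (intro add_mono range sum_mono mult_left_mono Suc A0)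
      also have "\<dots> = D * V (Suc n) p" by (simp add: VSuc distrib_left sum_distrib_left algebra_simps)
      finally show ?thesis .
    qed
  qed
  define FS where "FS = {\<bar>F n $ p1 - F n $ p2\<bar> | p1 p2. True}"
  have FSfin: "finite FS" unfolding FS_def
    by (rule finite_subset[of _ "(\<lambda>(p,q). \<bar>F n $p - F n $q\<bar>) ` UNIV"]) auto
  have "diff_norm (F n) \<le> 2 * D * B"
    unfolding diff_norm_def FS_def[symmetric]
  proof (subst Max_le_iff)
    show "finite FS" by (rule FSfin)
    show "FS \<noteq> {}" unfolding FS_def by auto
    show "\<forall>a\<in>FS. a \<le> 2 * D * B"
    proof
      fix a assume "a \<in> FS"
      then obtain p1 p2 where a: "a = \<bar>F n $ p1 - F n $ p2\<bar>" unfolding FS_def by auto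
      have "a = \<bar>e n p1 - e n p2\<bar>" unfolding a e_def by simp
      also have "\<dots> \<le> \<bar>e n p1\<bar> + \<bar>e n p2\<bar>" by simp
      also have "\<dots> \<le> D * V n p1 + D * V n p2" using ebound by (intro add_mono)
      also have "\<dots> \<le> D * B + D * B" using Vb D0 by (intro add_mono mult_left_mono)
      finally show "a \<le> 2 * D * B" by (simp add: algebra_simps)
    qed
  qed
  also have "\<dots> \<le> 10 * D * B" using D0 NB by (intro mult_right_mono) auto
  finally show ?thesis unfolding F_def B_def D_def N_def y_def by (simp add: algebra_simps)
qed

end
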